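(* Let $A,B$ be abstract state spaces and let $\omega\in A\otimes_{\max}B$ be a bipartite state. Then $\omega$ is steering for its $B$-marginal $\omega^B$ if and only if the restriction $\hat\omega:[0,u_A]\to[0,\omega^B]$ is a strong quotient map of ordered sets.
   Context: An abstract state space is a pair $(A,u_A)$ where $A$ is a finite-dimensional real vector space with a closed, pointed, generating convex cone $A_+$, and $u_A$ is an interior point of the dual cone $A^*_+$. For $x\le y$ in an ordered vector space, $[x,y]=\{z: x\le z\le y\}$; thus $[0,u_A]\subseteq A^*$ is the set of effects. An observable on $A$ is a finite family of effects summing to $u_A$. $A\otimes_{\max}B$ is the space of bilinear forms on $A^*\times B^*$ nonnegative on $A^*_+\times B^*_+$ (every bipartite composite state lies in it); a state is such a form with $\omega(u_A,u_B)=1$; $\hat\omega:A^*\to B$ is $\hat\omega(a)(b)=\omega(a,b)$, and $\omega^B=\hat\omega(u_A)$. An ensemble for $\beta\in B_+$ is a finite family $\beta_i\in B_+$ with $\sum_i\beta_i=\beta$. $\omega$ is steering for its $B$-marginal if for every ensemble $\{\beta_i\}$ for $\omega^B$ there is an observable $\{x_i\}$ on $A$ with $\hat\omega(x_i)=\beta_i$ for all $i$. For partially ordered sets $X,Y$, an order-preserving surjection $p:X\to Y$ is a strong quotient map if every finite chain $y_1\le y_2\le\cdots\le y_n$ in $Y$ is the image of some chain $x_1\le x_2\le\cdots\le x_n$ in $X$, i.e., $y_i=p(x_i)$ for all $i$. *)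

theory Defs
  imports "HOL-Analysis.Analysis"
begin

text \<open>A finite-dimensional real vector space is modelled by a type of class
  euclidean_space. Its dual space is identified with the same type via the inner product:
  the vector f represents the functional (\<lambda>x. f \<bullet> x). Consequently the double dual is
  again the type itself.\<close>

definition dual_cone :: "'a::euclidean_space set \<Rightarrow> 'a set" where
  "dual_cone C = {f. \<forall>x\<in>C. 0 \<le> f \<bullet> x}"

definition pointed_cone :: "'a::real_vector set \<Rightarrow> bool" where
  "pointed_cone C \<longleftrightarrow> C \<inter> uminus ` C = {0}"

definition generating_cone :: "'a::real_vector set \<Rightarrow> bool" where
  "generating_cone C \<longleftrightarrow> {x - y | x y. x \<in> C \<and> y \<in> C} = UNIV"

definition abstract_state_space :: "'a::euclidean_space set \<Rightarrow> 'a \<Rightarrow> bool" where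
  "abstract_state_space Cp u \<longleftrightarrow>
     convex_cone Cp \<and> closed Cp \<and> pointed_cone Cp \<and> generating_cone Cp \<and>
     u \<in> interior (dual_cone Cp)"

definition order_interval :: "'a::real_vector set \<Rightarrow> 'a \<Rightarrow> 'a \<Rightarrow> 'a set" where
  "order_interval P x y = {z. z - x \<in> P \<and> y - z \<in> P}"

definition cone_le :: "'a::real_vector set \<Rightarrow> 'a \<Rightarrow> 'a \<Rightarrow> bool" where
  "cone_le P x y \<longleftrightarrow> y - x \<in> P"

definition max_tensor ::
  "'a::euclidean_space set \<Rightarrow> 'b::euclidean_space set \<Rightarrow> ('a \<Rightarrow> 'b \<Rightarrow> real) set" where
  "max_tensor Ap Bp = {\<omega>. bilinear \<omega> \<and>
      (\<forall>a\<in>dual_cone Ap. \<forall>b\<in>dual_cone Bp. 0 \<le> \<omega> a b)}"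

definition bipartite_state ::
  "'a::euclidean_space set \<Rightarrow> 'a \<Rightarrow> 'b::euclidean_space set \<Rightarrow> 'b \<Rightarrow> ('a \<Rightarrow> 'b \<Rightarrow> real) \<Rightarrow> bool" where
  "bipartite_state Ap uA Bp uB \<omega> \<longleftrightarrow> \<omega> \<in> max_tensor Ap Bp \<and> \<omega> uA uB = 1"

text \<open>\<omega>hat : A^* \<rightarrow> B, \<omega>hat(a)(b) = \<omega>(a,b); the element of B representing the functional \<omega> a
  on B^* (= the type 'b via inner product).\<close>
definition omega_hat :: "('a \<Rightarrow> 'b::euclidean_space \<Rightarrow> real) \<Rightarrow> 'a \<Rightarrow> 'b" where
  "omega_hat \<omega> a = (\<Sum>i\<in>Basis. \<omega> a i *\<^sub>R i)"

definition marginal_B :: "('a \<Rightarrow> 'b::euclidean_space \<Rightarrow> real) \<Rightarrow> 'a \<Rightarrow> 'b" where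
  "marginal_B \<omega> uA = omega_hat \<omega> uA"

definition observable :: "'a::euclidean_space set \<Rightarrow> 'a \<Rightarrow> nat \<Rightarrow> (nat \<Rightarrow> 'a) \<Rightarrow> bool" where
  "observable Ap uA n x \<longleftrightarrow>
     (\<forall>i<n. x i \<in> order_interval (dual_cone Ap) 0 uA) \<and> (\<Sum>i<n. x i) = uA"

definition ensemble :: "'b::real_vector set \<Rightarrow> 'b \<Rightarrow> nat \<Rightarrow> (nat \<Rightarrow> 'b) \<Rightarrow> bool" where
  "ensemble Bp \<beta> n bs \<longleftrightarrow> (\<forall>i<n. bs i \<in> Bp) \<and> (\<Sum>i<n. bs i) = \<beta>"

definition steering ::
  "'a::euclidean_space set \<Rightarrow> 'a \<Rightarrow> 'b::euclidean_space set \<Rightarrow> ('a \<Rightarrow> 'b \<Rightarrow> real) \<Rightarrow> bool" where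
  "steering Ap uA Bp \<omega> \<longleftrightarrow>
     (\<forall>n bs. ensemble Bp (marginal_B \<omega> uA) n bs \<longrightarrow>
        (\<exists>x. observable Ap uA n x \<and> (\<forall>i<n. omega_hat \<omega> (x i) = bs i)))"

definition strong_quotient_map ::
  "'x set \<Rightarrow> ('x \<Rightarrow> 'x \<Rightarrow> bool) \<Rightarrow> 'y set \<Rightarrow> ('y \<Rightarrow> 'y \<Rightarrow> bool) \<Rightarrow> ('x \<Rightarrow> 'y) \<Rightarrow> bool" where
  "strong_quotient_map X leX Y leY p \<longleftrightarrow>
     p ` X = Y \<and>
     (\<forall>x1\<in>X. \<forall>x2\<in>X. leX x1 x2 \<longrightarrow> leY (p x1) (p x2)) \<and>
     (\<forall>ys. set ys \<subseteq> Y \<and> successively leY ys \<longrightarrow>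
        (\<exists>xs. set xs \<subseteq> X \<and> successively leX xs \<and> map p xs = ys))"

end

theory Submission imports Defs begin

lemma bipolar:
  fixes C :: "'b::euclidean_space set"
  assumes cc: "convex_cone C" and cl: "closed C" and z: "\<forall>f\<in>dual_cone C. 0 \<le> f \<bullet> z"
  shows "z \<in> C"
proof (rule ccontr)
  assume "z \<notin> C"
  then obtain a b where ab: "a \<bullet> z < b" "\<forall>x\<in>C. b < a \<bullet> x"
    using separating_hyperplane_closed_point[of C z] cc cl unfolding convex_cone_def by blast
  have "0 \<in> C" using cc convex_cone_iff by blast
  hence b: "b < 0" using ab by force
  have "a \<in> dual_cone C"
    unfolding dual_cone_def
  proof (intro CollectI ballI)
    fix x assume x: "x \<in> C"
    show "0 \<le> a \<bullet> x"
    proof (rule ccontr)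
      assume n: "\<not> 0 \<le> a \<bullet> x"
      define c where "c = 2 * b / (a \<bullet> x)"
      have "c \<ge> 0" using n b by (simp add: c_def divide_nonpos_neg)
      hence "c *\<^sub>R x \<in> C" using cc x convex_cone_scaleR by blast
      moreover have "a \<bullet> (c *\<^sub>R x) = 2 * b" using n by (simp add: c_def)
      ultimately show False using ab b by force
    qed
  qed
  thus False using z ab b by force
qed

lemma omega_hat_inner:
  assumes "bilinear \<omega>"
  shows "omega_hat \<omega> a \<bullet> b = \<omega> a b"
proof -
  have lin: "linear (\<omega> a)" using assms by (simp add: bilinear_def)
  have "\<omega> a b = \<omega> a (\<Sum>i\<in>Basis. (b \<bullet> i) *\<^sub>R i)" by (simp add: euclidean_representation)
  also have "\<dots> = (\<Sum>i\<in>Basis. (b \<bullet> i) * \<omega> a i)"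
    using lin by (simp add: linear_sum linear_scale)
  also have "\<dots> = omega_hat \<omega> a \<bullet> b"
    unfolding omega_hat_def by (simp add: inner_sum_right inner_commute mult.commute)
  finally show ?thesis by simp
qed

lemma omega_hat_linear:
  assumes "bilinear \<omega>"
  shows "linear (omega_hat \<omega>)"
proof (rule linearI)
  fix x y show "omega_hat \<omega> (x + y) = omega_hat \<omega> x + omega_hat \<omega> y"
    unfolding omega_hat_def using bilinear_ladd[OF assms]
    by (simp add: scaleR_add_left sum.distrib)
next
  fix c x show "omega_hat \<omega> (c *\<^sub>R x) = c *\<^sub>R omega_hat \<omega> x"
    unfolding omega_hat_def using bilinear_lmul[OF assms]
    by (simp add: scaleR_sum_right)
qed

lemma dual_cone_cc: "convex_cone (dual_cone C)"
  unfolding convex_cone_iff dual_cone_def by (auto simp: inner_add_left)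

lemma cc_sum:
  assumes "convex_cone C" "\<And>i. i \<in> I \<Longrightarrow> f i \<in> C"
  shows "sum f I \<in> C"
  using assms(2)
proof (induction I rule: infinite_finite_induct)
  case (infinite A) thus ?case using assms(1) convex_cone_iff by auto
next
  case empty thus ?case using assms(1) convex_cone_iff by auto
next
  case (insert x F) thus ?case using assms(1) convex_cone_add by auto
qed

lemma cc_sum_diff:
  fixes n k :: nat
  assumes "convex_cone C" "\<And>i. f i \<in> C" "k \<le> n"
  shows "(\<Sum>i<n. f i) - (\<Sum>i<k. f i) \<in> C"
  using assms(3)
proof (induction n rule: dec_induct)
  case base thus ?case using assms(1) convex_cone_iff by auto
next
  case (step n)
  have "(\<Sum>i<Suc n. f i) - (\<Sum>i<k. f i) = ((\<Sum>i<n. f i) - (\<Sum>i<k. f i)) + f n" by simp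
  thus ?case using step assms convex_cone_add by metis
qed


theorem theorem5p4:
  fixes Ap :: "'a::euclidean_space set" and uA :: 'a
    and Bp :: "'b::euclidean_space set" and uB :: 'b
    and \<omega> :: "'a \<Rightarrow> 'b \<Rightarrow> real"
  assumes "abstract_state_space Ap uA"
    and "abstract_state_space Bp uB"
    and "bipartite_state Ap uA Bp uB \<omega>"
  shows "steering Ap uA Bp \<omega> \<longleftrightarrow>
    strong_quotient_map
      (order_interval (dual_cone Ap) 0 uA) (cone_le (dual_cone Ap))
      (order_interval Bp 0 (marginal_B \<omega> uA)) (cone_le Bp)
      (omega_hat \<omega>)"
proof -
  define D where "D = dual_cone Ap"
  define X where "X = order_interval D 0 uA"
  define mB where "mB = marginal_B \<omega> uA"
  define Y where "Y = order_interval Bp 0 mB"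
  define p where "p = omega_hat \<omega>"
  have bil: "bilinear \<omega>" and pos: "\<And>a b. a \<in> dual_cone Ap \<Longrightarrow> b \<in> dual_cone Bp \<Longrightarrow> 0 \<le> \<omega> a b"
    and one: "\<omega> uA uB = 1"
    using assms(3) by (auto simp: bipartite_state_def max_tensor_def)
  have lin: "linear p" unfolding p_def by (rule omega_hat_linear[OF bil])
  have ccB: "convex_cone Bp" and clB: "closed Bp" using assms(2) by (auto simp: abstract_state_space_def)
  have ccD: "convex_cone D" unfolding D_def by (rule dual_cone_cc)
  have uAD: "uA \<in> D" using assms(1) interior_subset unfolding abstract_state_space_def D_def by blast
  have D0: "0 \<in> D" and DD: "\<And>x y. x \<in> D \<Longrightarrow> y \<in> D \<Longrightarrow> x + y \<in> D"
    using ccD convex_cone_iff by auto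
  have B0: "0 \<in> Bp" and BB: "\<And>x y. x \<in> Bp \<Longrightarrow> y \<in> Bp \<Longrightarrow> x + y \<in> Bp"
    using ccB convex_cone_iff by auto
  have pD: "p a \<in> Bp" if "a \<in> D" for a
  proof (rule bipolar[OF ccB clB], intro ballI)
    fix f assume "f \<in> dual_cone Bp"
    hence "0 \<le> \<omega> a f" using pos that D_def by blast
    thus "0 \<le> f \<bullet> p a" using omega_hat_inner[OF bil] by (simp add: p_def inner_commute)
  qed
  have pu: "p uA = mB" by (simp add: p_def mB_def marginal_B_def)
  have X0: "0 \<in> X" and XuA: "uA \<in> X" using D0 uAD by (auto simp: X_def order_interval_def)
  have "steering Ap uA Bp \<omega> \<longleftrightarrow> strong_quotient_map X (cone_le D) Y (cone_le Bp) p"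
  proof
    assume st: "steering Ap uA Bp \<omega>"
    have lift: "\<exists>xs. set xs \<subseteq> X \<and> successively (cone_le D) xs \<and> map p xs = ys"
      if ys: "set ys \<subseteq> Y" "successively (cone_le Bp) ys" for ys
    proof -
      define m where "m = length ys"
      define yy where "yy k = (if k = 0 then 0 else if k \<le> m then ys ! (k - 1) else mB)" for k
      define bs where "bs i = yy (Suc i) - yy i" for i
      have ens: "ensemble Bp mB (Suc m) bs"
        unfolding ensemble_def
      proof
        show "\<forall>i<Suc m. bs i \<in> Bp"
        proof (intro allI impI)
          fix i assume i: "i < Suc m"
          show "bs i \<in> Bp"
          proof (cases "i = 0")
            case True
            show ?thesis
            proof (cases "m = 0")
              case True thus ?thesis using \<open>i = 0\<close> pD[OF uAD] pu by (simp add: bs_def yy_def)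
            next
              case False
              hence "ys ! 0 \<in> Y" using ys m_def by auto
              thus ?thesis using \<open>i = 0\<close> False by (simp add: bs_def yy_def Y_def order_interval_def)
            qed
          next
            case False
            show ?thesis
            proof (cases "i = m")
              case True
              hence "ys ! (m - 1) \<in> Y" using ys m_def False by auto
              thus ?thesis using True False by (simp add: bs_def yy_def Y_def order_interval_def)
            next
              case F2: False
              hence "cone_le Bp (ys ! (i - 1)) (ys ! Suc (i - 1))"
                using ys(2) successively_nth[of "cone_le Bp" ys "i - 1"] i False m_def by auto
              thus ?thesis using False F2 i by (simp add: bs_def yy_def cone_le_def)
            qed
          qed
        qed
        show "(\<Sum>i<Suc m. bs i) = mB"
          unfolding bs_def sum_lessThan_telescope by (simp add: yy_def)
      qed
      then obtain x where obs: "observable Ap uA (Suc m) x" and px: "\<forall>i<Suc m. omega_hat \<omega> (x i) = bs i"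
        using st ens unfolding steering_def mB_def by blast
      define x' where "x' i = (if i < Suc m then x i else 0)" for i
      have x'D: "x' i \<in> D" for i using obs D0 by (auto simp: x'_def observable_def order_interval_def D_def)
      have sumx: "(\<Sum>i<Suc m. x' i) = uA" using obs by (simp add: x'_def observable_def)
      define xs where "xs = map (\<lambda>j. \<Sum>i<Suc j. x' i) [0..<m]"
      have "set xs \<subseteq> X"
      proof
        fix z assume "z \<in> set xs"
        then obtain j where j: "j < m" "z = (\<Sum>i<Suc j. x' i)" by (auto simp: xs_def)
        have h1: "z \<in> D" unfolding j(2) by (rule cc_sum[OF ccD x'D])
        have h0: "(\<Sum>i<Suc m. x' i) - (\<Sum>i<Suc j. x' i) \<in> D"
          by (rule cc_sum_diff[OF ccD x'D]) (use j in simp)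
        have "uA - z \<in> D" using h0 unfolding sumx j(2) .
        with h1 show "z \<in> X" by (simp add: X_def order_interval_def)
      qed
      moreover have "successively (cone_le D) xs"
        unfolding successively_conv_nth xs_def using x'D by (simp add: cone_le_def)
      moreover have "map p xs = ys"
      proof (rule nth_equalityI)
        show "length (map p xs) = length ys" by (simp add: xs_def m_def)
        fix j assume "j < length (map p xs)"
        hence j: "j < m" by (simp add: xs_def)
        have "p (xs ! j) = (\<Sum>i<Suc j. p (x' i))" using j linear_sum[OF lin, of x' "{..<Suc j}"] by (simp del: sum.lessThan_Suc add: xs_def)
        also have "\<dots> = (\<Sum>i<Suc j. bs i)" using j px by (intro sum.cong) (auto simp: x'_def p_def)
        also have "\<dots> = ys ! j" unfolding bs_def sum_lessThan_telescope using j by (simp add: yy_def)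
        finally show "map p xs ! j = ys ! j" using j by (simp add: xs_def)
      qed
      ultimately show ?thesis by blast
    qed
    show "strong_quotient_map X (cone_le D) Y (cone_le Bp) p"
      unfolding strong_quotient_map_def
    proof (intro conjI)
      show "p ` X = Y"
      proof
        show "p ` X \<subseteq> Y"
        proof
          fix y assume "y \<in> p ` X"
          then obtain x where x: "x \<in> X" "y = p x" by blast
          have "p uA - p x = p (uA - x)" using lin by (simp add: linear_diff)
          have "x \<in> D" "uA - x \<in> D" using x(1) by (auto simp: X_def order_interval_def)
          hence "p x \<in> Bp" "p (uA - x) \<in> Bp" using pD by blast+
          thus "y \<in> Y" using x(2) pu \<open>p uA - p x = p (uA - x)\<close> by (simp add: Y_def order_interval_def)
        qed
        show "Y \<subseteq> p ` X"
        proof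
          fix y assume "y \<in> Y"
          have y1: "set [y] \<subseteq> Y" using \<open>y \<in> Y\<close> by simp
          have y2: "successively (cone_le Bp) [y]" by simp
          from lift[OF y1 y2] obtain xs
            where xs0: "set xs \<subseteq> X \<and> successively (cone_le D) xs \<and> map p xs = [y]" by (elim exE)
          have xs1: "set xs \<subseteq> X" using xs0 by (rule conjunct1)
          have xs2: "map p xs = [y]" using xs0 by (simp only:)
          obtain x zs where "xs = x # zs" "p x = y" using xs2 unfolding map_eq_Cons_conv by blast
          moreover have "x \<in> X" using xs1 calculation(1) by simp
          ultimately show "y \<in> p ` X" by blast
        qed
      qed
      show "\<forall>x1\<in>X. \<forall>x2\<in>X. cone_le D x1 x2 \<longrightarrow> cone_le Bp (p x1) (p x2)"
      proof (intro ballI impI)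
        fix x1 x2 assume "x1 \<in> X" "x2 \<in> X" "cone_le D x1 x2"
        hence "x2 - x1 \<in> D" by (simp add: cone_le_def)
        hence "p (x2 - x1) \<in> Bp" by (rule pD)
        thus "cone_le Bp (p x1) (p x2)" using linear_diff[OF lin, of x2 x1] by (simp add: cone_le_def)
      qed
      show "\<forall>ys. set ys \<subseteq> Y \<and> successively (cone_le Bp) ys \<longrightarrow>
        (\<exists>xs. set xs \<subseteq> X \<and> successively (cone_le D) xs \<and> map p xs = ys)"
      proof (intro allI impI)
        fix ys assume h: "set ys \<subseteq> Y \<and> successively (cone_le Bp) ys"
        show "\<exists>xs. set xs \<subseteq> X \<and> successively (cone_le D) xs \<and> map p xs = ys"
          using h by (intro lift) simp_all
      qed
    qed
  next
    assume sq: "strong_quotient_map X (cone_le D) Y (cone_le Bp) p"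
    show "steering Ap uA Bp \<omega>"
      unfolding steering_def
    proof (intro allI impI)
      fix n bs assume ens: "ensemble Bp (marginal_B \<omega> uA) n bs"
      have "n \<noteq> 0"
      proof
        assume "n = 0"
        hence "mB = 0" using ens by (simp add: ensemble_def mB_def)
        hence "p uA \<bullet> uB = 0" using pu by simp
        thus False using one omega_hat_inner[OF bil] by (simp add: p_def)
      qed
      then obtain m where n: "n = Suc m" by (cases n) auto
      define b' where "b' i = (if i < n then bs i else 0)" for i
      have b'B: "b' i \<in> Bp" for i using ens B0 by (auto simp: b'_def ensemble_def)
      have sumb: "(\<Sum>i<n. b' i) = mB" using ens by (simp add: b'_def ensemble_def mB_def)
      define P where "P k = (\<Sum>i<k. b' i)" for k
      define ys where "ys = map (\<lambda>j. P (Suc j)) [0..<m]"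
      have "set ys \<subseteq> Y"
      proof
        fix z assume "z \<in> set ys"
        then obtain j where j: "j < m" "z = P (Suc j)" by (auto simp: ys_def)
        have h1: "z \<in> Bp" unfolding j(2) P_def by (rule cc_sum[OF ccB b'B])
        have h0: "(\<Sum>i<n. b' i) - (\<Sum>i<Suc j. b' i) \<in> Bp"
          by (rule cc_sum_diff[OF ccB b'B]) (use j n in simp)
        have "mB - z \<in> Bp" using h0 unfolding sumb j(2) P_def .
        with h1 show "z \<in> Y" by (simp add: Y_def order_interval_def)
      qed
      moreover have "successively (cone_le Bp) ys"
        unfolding successively_conv_nth ys_def using b'B by (simp add: cone_le_def P_def)
      ultimately obtain xs where xs: "set xs \<subseteq> X" "successively (cone_le D) xs" "map p xs = ys"
        using sq unfolding strong_quotient_map_def by blast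
      have lxs: "length xs = m" using arg_cong[OF xs(3), of length] unfolding ys_def by simp
      define z where "z k = (if k = 0 then 0 else if k \<le> m then xs ! (k - 1) else uA)" for k
      have xsX: "xs ! j \<in> X" if "j < m" for j using xs(1) nth_mem[of j xs] lxs that by blast
      have zX: "z k \<in> X" for k
      proof (cases "k = 0")
        case True thus ?thesis using X0 by (simp add: z_def)
      next
        case False
        show ?thesis
        proof (cases "k \<le> m")
          case True
          hence "xs ! (k - 1) \<in> X" using False xsX[of "k - 1"] by simp
          thus ?thesis using True False by (simp add: z_def)
        next
          case F2: False thus ?thesis using False XuA by (simp add: z_def)
        qed
      qed
      have pz: "p (z k) = P k" if "k \<le> n" for k
      proof -
        have "k = 0 \<or> (0 < k \<and> k \<le> m) \<or> k = n" using that n by linarith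
        then consider "k = 0" | "0 < k" "k \<le> m" | "k = n" by blast
        thus ?thesis
        proof cases
          case 1 thus ?thesis using lin by (simp add: z_def P_def linear_0)
        next
          case 2
          have kl: "k - 1 < length xs" using 2 lxs by simp
          have "p (xs ! (k - 1)) = map p xs ! (k - 1)" using kl by simp
          hence "p (xs ! (k - 1)) = ys ! (k - 1)" unfolding xs(3) .
          thus ?thesis using 2 by (simp add: z_def ys_def)
        next
          case 3 thus ?thesis using pu sumb n by (simp add: z_def P_def)
        qed
      qed
      have zstep: "z (Suc i) - z i \<in> D" if "i < n" for i
      proof -
        have "i = 0 \<or> (0 < i \<and> i < m) \<or> i = m" using that n by linarith
        then consider "i = 0" | "0 < i" "i < m" | "i = m" by blast
        thus ?thesis
        proof cases
          case 1 thus ?thesis using zX[of 1] by (simp add: z_def X_def order_interval_def)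
        next
          case 2
          hence "cone_le D (xs ! (i - 1)) (xs ! Suc (i - 1))"
            using successively_nth[OF xs(2), of "i - 1"] lxs 2 by simp
          thus ?thesis using 2 by (simp add: z_def cone_le_def)
        next
          case 3 thus ?thesis using zX[of m] by (simp add: z_def X_def order_interval_def)
        qed
      qed
      define e where "e i = z (Suc i) - z i" for i
      have "observable Ap uA n e"
        unfolding observable_def
      proof (intro conjI allI impI)
        fix i assume i: "i < n"
        have "uA - e i = (uA - z (Suc i)) + z i" by (simp add: e_def)
        moreover have "uA - z (Suc i) \<in> D" using zX[of "Suc i"] by (simp add: X_def order_interval_def)
        moreover have "z i \<in> D" using zX[of i] by (simp add: X_def order_interval_def)
        ultimately have "uA - e i \<in> D" using DD by metis
        thus "e i \<in> order_interval (dual_cone Ap) 0 uA"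
          using zstep[OF i] by (simp add: e_def order_interval_def D_def)
      next
        show "(\<Sum>i<n. e i) = uA" unfolding e_def sum_lessThan_telescope using n by (simp add: z_def)
      qed
      moreover have "\<forall>i<n. omega_hat \<omega> (e i) = bs i"
      proof (intro allI impI)
        fix i assume i: "i < n"
        have "p (e i) = p (z (Suc i)) - p (z i)" using lin by (simp add: e_def linear_diff)
        also have "\<dots> = P (Suc i) - P i" using pz i by simp
        also have "\<dots> = bs i" using i by (simp add: P_def b'_def)
        finally show "omega_hat \<omega> (e i) = bs i" by (simp add: p_def)
      qed
      ultimately show "\<exists>x. observable Ap uA n x \<and> (\<forall>i<n. omega_hat \<omega> (x i) = bs i)" by blast
    qed
  qed
  thus ?thesis by (simp add: D_def X_def Y_def mB_def p_def)
qed

end
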